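(* Let $\ell\ge1$. For each integer $\kappa\ge1$ and $u>1$, \[ \frac{d}{du}\widetilde{K}_{\ell}(u,\kappa)=\kappa\, \widetilde{K}_{\ell}(u,\kappa-1)+\sum_{m=0}^{\ell}\sum_{r=0}^{\ell-m}\frac{(-1)^{r}\Gamma(\kappa+1)}{m!\,(\ell-m-r)!}E_{\kappa,m}C_{r,0}\frac{d}{du}\left(\log^{\ell-m-r}u\right). \]
   Context: For integers $\ell\ge1$, $\kappa\ge0$ and $u>1$, define \[ \widetilde{K}_{\ell}(u,\kappa):=\sum_{m=0}^{\ell}\sum_{n=m}^{\kappa}\sum_{r=0}^{\ell-m}\frac{(-1)^{r}\Gamma(\kappa+1)}{m!\,(\ell-m-r)!}E_{n,m}C_{r,\kappa-n}u^{\kappa-n}\log^{\ell-m-r}u, \] where the sum over $n$ is empty if $m>\kappa$; the constants $C_{r,\kappa}$ ($r,\kappa\ge0$) are defined by $\sum_{r\ge0}C_{r,\kappa}z^r=e^{\gamma z}/\Gamma(\kappa+1-z)$ with $\gamma$ Euler's constant; and the constants $E_{n,m}$ ($n,m\ge0$) are defined by $\sum_{n\ge0}E_{n,m}z^n=\left(\int_0^z\frac{1-e^{-t}}{t}\,dt\right)^m$. *)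

theory Defs
  imports "HOL-Analysis.Analysis"
begin

definition Ccoef :: "nat \<Rightarrow> nat \<Rightarrow> real" where
  "Ccoef r k = (deriv ^^ r) (\<lambda>z::real. exp (euler_mascheroni * z) * rGamma (real k + 1 - z)) 0 / fact r"

definition Ein :: "real \<Rightarrow> real" where
  "Ein z = (LBINT t=ereal 0..ereal z. (1 - exp (- t)) / t)"

definition Ecoef :: "nat \<Rightarrow> nat \<Rightarrow> real" where
  "Ecoef n m = (deriv ^^ n) (\<lambda>z. Ein z ^ m) 0 / fact n"

definition Ktilde :: "nat \<Rightarrow> real \<Rightarrow> nat \<Rightarrow> real" where
  "Ktilde l u k = (\<Sum>m=0..l. \<Sum>n=m..k. \<Sum>r=0..l-m.
      (-1)^r * Gamma (real k + 1) / (fact m * fact (l - m - r))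
      * Ecoef n m * Ccoef r (k - n) * u ^ (k - n) * ln u ^ (l - m - r))"

end

theory Submission
  imports Defs "HOL-Complex_Analysis.Complex_Analysis"
begin


lemma real_higher_deriv:
  assumes "F holomorphic_on UNIV"
  shows "(deriv ^^ n) (\<lambda>x. Re (F (of_real x))) = (\<lambda>x. Re ((deriv ^^ n) F (of_real x)))"
proof (induction n)
  case 0 then show ?case by simp
next
  case (Suc n)
  have hol: "(deriv ^^ n) F holomorphic_on UNIV"
    using assms by (intro holomorphic_higher_deriv) auto
  show ?case
  proof
    fix x :: real
    have "((deriv ^^ n) F has_field_derivative deriv ((deriv ^^ n) F) (of_real x)) (at (of_real x))"
      using hol by (meson UNIV_I holomorphic_derivI open_UNIV)
    then have "((\<lambda>x. Re ((deriv ^^ n) F (of_real x))) has_real_derivative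
           Re (deriv ((deriv ^^ n) F) (of_real x))) (at x)"
      by (intro has_field_derivative_Re has_vector_derivative_real_field)
    then show "(deriv ^^ Suc n) (\<lambda>x. Re (F (complex_of_real x))) x =
          Re ((deriv ^^ Suc n) F (complex_of_real x))"
      by (simp add: Suc DERIV_imp_deriv)
  qed
qed

definition FC :: "nat \<Rightarrow> complex \<Rightarrow> complex" where
  "FC k z = exp (of_real euler_mascheroni * z) * rGamma (of_nat k + 1 - z)"

lemma FC_hol: "FC k holomorphic_on UNIV"
  unfolding FC_def by (intro holomorphic_intros)

lemma Ccoef_FC: "Ccoef r k = Re ((deriv ^^ r) (FC k) 0) / fact r"
proof -
  have "(\<lambda>z::real. exp (euler_mascheroni * z) * rGamma (real k + 1 - z)) = (\<lambda>x. Re (FC k (of_real x)))"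
  proof
    fix x :: real
    have "FC k (of_real x) = of_real (exp (euler_mascheroni * x) * rGamma (real k + 1 - x))"
    proof -
      have e1: "exp (complex_of_real (euler_mascheroni * x)) = of_real (exp (euler_mascheroni * x))"
        by (rule exp_of_real)
      have e2: "rGamma (complex_of_real (real k + 1 - x)) = of_real (rGamma (real k + 1 - x))"
        by (rule rGamma_complex_of_real)
      have e3: "complex_of_real (euler_mascheroni * x) = of_real euler_mascheroni * of_real x" by simp
      have e4: "complex_of_real (real k + 1 - x) = of_nat k + 1 - of_real x" by simp
      show ?thesis unfolding FC_def of_real_mult e1[unfolded e3, symmetric] e2[unfolded e4, symmetric] ..
    qed
    then show "exp (euler_mascheroni * x) * rGamma (real k + 1 - x) = Re (FC k (of_real x))" by simp
  qed
  then show ?thesis unfolding Ccoef_def using real_higher_deriv[OF FC_hol] by simp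
qed

lemma FC_rec: "FC k z = (of_nat (Suc k) - z) * FC (Suc k) z"
proof -
  have h: "rGamma (of_nat k + 1 - z) = (of_nat (Suc k) - z) * rGamma (of_nat (Suc k) + 1 - z)"
    using rGamma_plus1[of "of_nat (Suc k) - z"] by (simp add: algebra_simps)
  show ?thesis unfolding FC_def h by (simp add: mult_ac)
qed

lemma hd_lin: "(deriv ^^ i) (\<lambda>w::complex. c - w) 0 = (if i = 0 then c else if i = 1 then -1 else 0)"
proof -
  have "(deriv ^^ i) (\<lambda>w::complex. c - w) 0 = (deriv ^^ i) (\<lambda>w. c) 0 - (deriv ^^ i) (\<lambda>w. w) 0"
    by (rule higher_deriv_diff[of _ UNIV]) (auto intro: holomorphic_intros)
  then show ?thesis by simp
qed

lemma aux_div: "(S::real) \<noteq> 0 \<Longrightarrow> a = K*b - S*c \<Longrightarrow> a/(S*f) = K*(b/(S*f)) - c/f"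
  by (simp add: diff_divide_distrib)

lemma Ccoef_rec:
  "Ccoef r k = real (Suc k) * Ccoef r (Suc k) - (if r = 0 then 0 else Ccoef (r - 1) (Suc k))"
proof -
  have "(deriv ^^ r) (FC k) 0 = (deriv ^^ r) (\<lambda>w. (of_nat (Suc k) - w) * FC (Suc k) w) 0"
    by (subst FC_rec[abs_def]) (rule refl)
  also have "\<dots> = (\<Sum>i = 0..r. of_nat (r choose i) * (deriv ^^ i) (\<lambda>w. of_nat (Suc k) - w) 0 * (deriv ^^ (r-i)) (FC (Suc k)) 0)"
    by (rule higher_deriv_mult[of _ UNIV]) (auto intro: holomorphic_intros FC_hol)
  also have "\<dots> = of_nat (Suc k) * (deriv ^^ r) (FC (Suc k)) 0 - (if r = 0 then 0 else of_nat r * (deriv ^^ (r-1)) (FC (Suc k)) 0)"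
  proof (cases r)
    case 0 then show ?thesis by (simp add: hd_lin)
  next
    case (Suc r')
    have "(\<Sum>i = 0..Suc r'. of_nat (Suc r' choose i) * (deriv ^^ i) (\<lambda>w. of_nat (Suc k) - w) 0 * (deriv ^^ (Suc r'-i)) (FC (Suc k)) 0)
      = (\<Sum>i \<in> {0,1}. of_nat (Suc r' choose i) * (deriv ^^ i) (\<lambda>w. of_nat (Suc k) - w) 0 * (deriv ^^ (Suc r'-i)) (FC (Suc k)) 0)"
      by (rule sum.mono_neutral_right) (auto simp: hd_lin)
    then show ?thesis using Suc by (simp add: hd_lin algebra_simps)
  qed
  finally have eq: "(deriv ^^ r) (FC k) 0 = \<dots>" .
  show ?thesis
  proof (cases r)
    case 0 then show ?thesis using eq by (simp add: Ccoef_FC)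
  next
    case (Suc r')
    have eq2: "Re ((deriv ^^ Suc r') (FC k) 0) = real (Suc k) * Re ((deriv ^^ Suc r') (FC (Suc k)) 0) - real (Suc r') * Re ((deriv ^^ r') (FC (Suc k)) 0)"
      using eq Suc by simp
    have key: "\<And>a b c K. a = K*b - real (Suc r')*c \<Longrightarrow> a / fact (Suc r') = K*(b/fact (Suc r')) - c / fact r'"
      using aux_div[of "real (Suc r')"] by (simp only: fact_Suc of_nat_mult)
    have "Ccoef (Suc r') k = real (Suc k) * Ccoef (Suc r') (Suc k) - Ccoef r' (Suc k)"
      unfolding Ccoef_FC by (rule key[OF eq2])
    then show ?thesis using Suc by simp
  qed
qed


definition GC :: "complex \<Rightarrow> complex" where
  "GC z = (if z = 0 then 1 else (1 - exp (- z)) / z)"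

lemma GC_hol: "GC holomorphic_on UNIV"
proof -
  let ?f = "\<lambda>z::complex. - exp (- z)"
  have hf: "?f holomorphic_on UNIV" by (intro holomorphic_intros)
  have d: "deriv ?f 0 = 1"
    by (rule DERIV_imp_deriv) (auto intro!: derivative_eq_intros)
  have "(\<lambda>z. if z = 0 then deriv ?f 0 else (?f z - ?f 0) / (z - 0)) holomorphic_on UNIV"
    by (rule pole_lemma[OF hf]) auto
  then show ?thesis
    by (rule holomorphic_transform) (auto simp: GC_def d)
qed

lemma GC_real: "GC (of_real x) = of_real (if x = 0 then 1 else (1 - exp (- x)) / x)"
  by (simp add: GC_def exp_of_real[symmetric])

definition EinC :: "complex \<Rightarrow> complex" where
  "EinC = (SOME g. \<forall>x. (g has_field_derivative GC x) (at x) \<and> g 0 = 0)"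

lemma EinC_props: "\<forall>x. (EinC has_field_derivative GC x) (at x)" "EinC 0 = 0"
proof -
  obtain g where g: "\<And>x. x \<in> UNIV \<Longrightarrow> (g has_field_derivative GC x) (at x within UNIV)"
    using holomorphic_convex_primitive'[OF convex_UNIV open_UNIV GC_hol] by blast
  have "\<exists>h. \<forall>x. (h has_field_derivative GC x) (at x) \<and> h 0 = 0"
    using g by (intro exI[of _ "\<lambda>z. g z - g 0"]) (auto intro!: derivative_eq_intros)
  then have "\<forall>x. (EinC has_field_derivative GC x) (at x) \<and> EinC 0 = 0"
    unfolding EinC_def by (rule someI_ex)
  then show "\<forall>x. (EinC has_field_derivative GC x) (at x)" "EinC 0 = 0" by auto
qed

lemma EinC_hol: "EinC holomorphic_on UNIV"
  using EinC_props(1) holomorphic_on_def field_differentiable_def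
  by (metis field_differentiable_at_within holomorphic_on_open open_UNIV)

lemma EinC_real_im: "Im (EinC (of_real x)) = 0"
proof -
  have "\<And>x. ((\<lambda>x. Im (EinC (of_real x))) has_real_derivative 0) (at x)"
  proof -
    fix x :: real
    have "((\<lambda>x. Im (EinC (of_real x))) has_real_derivative Im (GC (of_real x))) (at x)"
      by (intro has_field_derivative_Im has_vector_derivative_real_field) (use EinC_props in auto)
    then show "((\<lambda>x. Im (EinC (of_real x))) has_real_derivative 0) (at x)"
      by (simp add: GC_real)
  qed
  then have "\<forall>x. ((\<lambda>x. Im (EinC (of_real x))) has_real_derivative 0) (at x)" by blast
  then have "Im (EinC (of_real x)) = Im (EinC (of_real 0))"
    by (rule DERIV_isconst_all)
  then show ?thesis using EinC_props(2) by simp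
qed

lemma Ein_eq: "Ein x = Re (EinC (of_real x))"
proof -
  let ?g = "\<lambda>t. Re (GC (of_real t))"
  have "continuous_on UNIV (\<lambda>x. GC (of_real x))"
    by (rule continuous_on_compose2[OF holomorphic_on_imp_continuous_on[OF GC_hol]]) (auto intro: continuous_intros)
  then have contg: "continuous_on UNIV ?g"
    by (intro continuous_intros)
  have "Ein x = (LBINT t=ereal 0..ereal x. ?g t)"
    unfolding Ein_def
  proof (rule interval_integral_cong_AE)
    have m1: "(\<lambda>t::real. 1 - exp (- t)) \<in> borel_measurable borel"
      by (intro borel_measurable_continuous_onI continuous_intros)
    have m2: "(\<lambda>t::real. t) \<in> borel_measurable borel" by simp
    show "(\<lambda>t::real. (1 - exp (- t)) / t) \<in> borel_measurable borel"
      using borel_measurable_divide[OF m1 m2] by simp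
    show "?g \<in> borel_measurable borel" by (rule borel_measurable_continuous_onI[OF contg])
    show "AE t \<in> einterval (min (ereal 0) (ereal x)) (max (ereal 0) (ereal x)) in lborel. (1 - exp (- t)) / t = ?g t"
      using AE_lborel_singleton[of "0::real"] by eventually_elim (simp add: GC_real)
  qed
  also have "\<dots> = Re (EinC (of_real x)) - Re (EinC (of_real 0))"
  proof (rule interval_integral_FTC_finite)
    show "continuous_on {min 0 x..max 0 x} ?g" using contg by (rule continuous_on_subset) auto
    fix y assume "min 0 x \<le> y" "y \<le> max 0 x"
    have "((\<lambda>x. Re (EinC (of_real x))) has_real_derivative ?g y) (at y)"
      by (intro has_field_derivative_Re has_vector_derivative_real_field) (use EinC_props in auto)
    then show "((\<lambda>x. Re (EinC (of_real x))) has_vector_derivative ?g y) (at y within {min 0 x..max 0 x})"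
      by (simp add: has_real_derivative_iff_has_vector_derivative[symmetric] has_field_derivative_at_within)
  qed
  finally show ?thesis using EinC_props(2) by simp
qed

lemma EinC_real: "EinC (of_real x) = of_real (Ein x)"
  using EinC_real_im[of x] Ein_eq[of x] complex_eq_iff by auto

lemma Ecoef_C: "Ecoef n m = Re ((deriv ^^ n) (\<lambda>z. EinC z ^ m) 0) / fact n"
proof -
  have "(\<lambda>z. Ein z ^ m) = (\<lambda>x. Re ((\<lambda>z. EinC z ^ m) (of_real x)))"
    by (auto simp: EinC_real simp flip: of_real_power)
  moreover have "(\<lambda>z. EinC z ^ m) holomorphic_on UNIV"
    by (intro holomorphic_intros EinC_hol)
  then have "(deriv ^^ n) (\<lambda>x. Re ((\<lambda>z. EinC z ^ m) (of_real x))) = (\<lambda>x. Re ((deriv ^^ n) (\<lambda>z. EinC z ^ m) (of_real x)))"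
    by (rule real_higher_deriv)
  ultimately show ?thesis unfolding Ecoef_def by simp
qed

lemma Ecoef_zero: assumes "n < m" shows "Ecoef n m = 0"
proof -
  define H where "H = (\<lambda>z. if z = 0 then deriv EinC 0 else (EinC z - EinC 0) / (z - 0))"
  have hH: "H holomorphic_on UNIV" unfolding H_def by (rule pole_lemma[OF EinC_hol]) auto
  have e: "EinC z ^ m = (z - 0) ^ m * H z ^ m" for z
    using EinC_props(2) by (auto simp: H_def power_mult_distrib[symmetric])
  have "(deriv ^^ n) (\<lambda>z. EinC z ^ m) 0 = (deriv ^^ n) (\<lambda>z. (z - 0) ^ m * H z ^ m) 0"
    by (simp only: e)
  also have "\<dots> = (\<Sum>i = 0..n. of_nat (n choose i) * (deriv ^^ i) (\<lambda>z. (z - 0) ^ m) 0 * (deriv ^^ (n-i)) (\<lambda>z. H z ^ m) 0)"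
    by (rule higher_deriv_mult[of _ UNIV]) (auto intro: holomorphic_intros hH)
  also have "\<dots> = 0"
  proof (intro sum.neutral ballI)
    fix i assume "i \<in> {0..n}"
    then have "i < m" using assms by auto
    then have "(deriv ^^ i) (\<lambda>z. (z - 0) ^ m) (0::complex) = 0"
      by (simp only: higher_deriv_power) simp
    then show "of_nat (n choose i) * (deriv ^^ i) (\<lambda>z. (z - 0) ^ m) 0 * (deriv ^^ (n-i)) (\<lambda>z. H z ^ m) 0 = 0"
      by (simp only: mult_zero_right mult_zero_left)
  qed
  finally show ?thesis by (simp add: Ecoef_C)
qed

lemma shift_sum:
  fixes c :: "nat \<Rightarrow> real" and L :: real
  shows "(\<Sum>r=0..N. (-1)^r / fact (N-r) * c r * (real (N-r) * L^(N-r-1)))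
       = - (\<Sum>r=0..N. (if r=0 then 0 else (-1)^r / fact (N-r) * c (r-1) * L^(N-r)))"
proof (cases N)
  case 0 then show ?thesis by simp
next
  case (Suc M)
  have "(\<Sum>r=0..Suc M. (-1)^r / fact (Suc M-r) * c r * (real (Suc M-r) * L^(Suc M-r-1)))
      = (\<Sum>r=0..M. (-1)^r / fact (Suc M-r) * c r * (real (Suc M-r) * L^(Suc M-r-1)))"
    by (subst sum.atLeast0_atMost_Suc) simp
  also have "\<dots> = (\<Sum>r=0..M. - ((-1)^Suc r / fact (Suc M - Suc r) * c r * L^(Suc M - Suc r)))"
  proof (rule sum.cong)
    fix r assume "r \<in> {0..M}"
    then have r: "r \<le> M" by simp
    then have f: "fact (Suc M - r) = real (Suc (M - r)) * (fact (M - r) :: real)"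
      by (simp add: Suc_diff_le fact_Suc del: of_nat_Suc)
    have e: "Suc M - r - 1 = M - r" "real (Suc M - r) = real (Suc (M - r))" using r by auto
    show "(-1)^r / fact (Suc M-r) * c r * (real (Suc M-r) * L^(Suc M-r-1))
       = - ((-1)^Suc r / fact (Suc M - Suc r) * c r * L^(Suc M - Suc r))"
      unfolding f e by (simp del: of_nat_Suc)
  qed simp
  also have "\<dots> = - (\<Sum>r=0..Suc M. (if r=0 then 0 else (-1)^r / fact (Suc M-r) * c (r-1) * L^(Suc M-r)))"
    by (subst sum.atLeast0_atMost_Suc_shift) (simp add: sum_negf)
  finally show ?thesis by (simp only: Suc)
qed

lemma inner:
  fixes c :: "nat \<Rightarrow> real" and u L G Mf E :: real
  assumes u: "u > 0" and p: "p \<ge> 1"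
  shows "(\<Sum>r=0..N. (-1)^r * G / (Mf * fact (N-r)) * E * c r *
            (real p * u^(p-1) * L^(N-r) + u^p * (real (N-r) * L^(N-r-1) / u)))
       = (\<Sum>r=0..N. (-1)^r * G / (Mf * fact (N-r)) * E *
            (real p * c r - (if r=0 then 0 else c (r-1))) * u^(p-1) * L^(N-r))"
proof -
  obtain p' where p': "p = Suc p'" using p by (cases p) auto
  have up: "u^p * (X / u) = u^(p-1) * X" for X
    using u by (simp add: p')
  let ?K = "G * E * u^(p-1) / Mf"
  have "(\<Sum>r=0..N. (-1)^r * G / (Mf * fact (N-r)) * E * c r *
            (real p * u^(p-1) * L^(N-r) + u^p * (real (N-r) * L^(N-r-1) / u)))
     = (\<Sum>r=0..N. (-1)^r * G / (Mf * fact (N-r)) * E * c r * (real p * u^(p-1) * L^(N-r)))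
       + ?K * (\<Sum>r=0..N. (-1)^r / fact (N-r) * c r * (real (N-r) * L^(N-r-1)))"
    unfolding up sum_distrib_left sum.distrib[symmetric]
    by (rule sum.cong) (simp_all add: algebra_simps)
  also have "\<dots> = (\<Sum>r=0..N. (-1)^r * G / (Mf * fact (N-r)) * E * c r * (real p * u^(p-1) * L^(N-r)))
       - ?K * (\<Sum>r=0..N. (if r=0 then 0 else (-1)^r / fact (N-r) * c (r-1) * L^(N-r)))"
    by (subst shift_sum) simp
  also have "\<dots> = (\<Sum>r=0..N. (-1)^r * G / (Mf * fact (N-r)) * E *
            (real p * c r - (if r=0 then 0 else c (r-1))) * u^(p-1) * L^(N-r))"
    unfolding sum_distrib_left sum_subtractf[symmetric]
    by (rule sum.cong) (auto simp: field_simps diff_divide_distrib)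
  finally show ?thesis .
qed


theorem lemma3:
  fixes l k :: nat and u :: real
  assumes "l \<ge> 1" and "k \<ge> 1" and "u > 1"
  shows "((\<lambda>v. Ktilde l v k) has_real_derivative
           (real k * Ktilde l u (k - 1)
            + (\<Sum>m=0..l. \<Sum>r=0..l-m.
                (-1)^r * Gamma (real k + 1) / (fact m * fact (l - m - r))
                * Ecoef k m * Ccoef r 0 * deriv (\<lambda>v. ln v ^ (l - m - r)) u))) (at u)"
proof -
  obtain k' where k': "k = Suc k'" using assms(2) by (cases k) auto
  have u0: "u > 0" using assms(3) by simp
  define L where "L = ln u"
  define D where "D p j = real p * u^(p-1) * L^j + u^p * (real j * L^(j-1) / u)" for p j :: nat
  define G where "G = Gamma (real k + 1)"
  define X where "X m n r = (-1)^r * G / (fact m * fact (l - m - r)) * Ecoef n m * Ccoef r (k - n)" for m n r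
  define Y where "Y m n r = (-1)^r * Gamma (real k' + 1) / (fact m * fact (l - m - r)) * Ecoef n m * Ccoef r (k' - n) * u ^ (k' - n) * ln u ^ (l - m - r)" for m n r
  have dpow: "((\<lambda>v. v^p * ln v^j) has_real_derivative D p j) (at u)" for p j
    using u0 by (auto intro!: derivative_eq_intros simp: D_def L_def field_simps)
  have dl: "deriv (\<lambda>v. ln v ^ j) u = D 0 j" for j
    by (rule DERIV_imp_deriv) (use u0 in \<open>auto intro!: derivative_eq_intros simp: D_def L_def field_simps\<close>)
  have Kt: "(\<lambda>v. Ktilde l v k) = (\<lambda>v. \<Sum>m=0..l. \<Sum>n=m..k. \<Sum>r=0..l-m. X m n r * (v^(k-n) * ln v^(l-m-r)))"
    by (auto simp: Ktilde_def X_def G_def mult.assoc)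
  have der: "((\<lambda>v. Ktilde l v k) has_real_derivative (\<Sum>m=0..l. \<Sum>n=m..k. \<Sum>r=0..l-m. X m n r * D (k-n) (l-m-r))) (at u)"
    unfolding Kt by (intro DERIV_sum DERIV_cmult dpow)
  have gam: "real k * Gamma (real k' + 1) = G"
  proof -
    have "Gamma (real k' + 1) = fact k'" using Gamma_fact[of k'] by (simp add: add.commute)
    moreover have "G = fact k" using Gamma_fact[of k] by (simp add: add.commute G_def)
    ultimately show ?thesis using k' by simp
  qed
  have perm: "(\<Sum>n=m..k. \<Sum>r=0..l-m. X m n r * D (k-n) (l-m-r))
      = real k * (\<Sum>n=m..k'. \<Sum>r=0..l-m. Y m n r) + (\<Sum>r=0..l-m. X m k r * D 0 (l-m-r))" for m
  proof (cases "m \<le> k")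
    case False
    then have "Ecoef k m = 0" by (intro Ecoef_zero) simp
    then show ?thesis using False k' by (simp add: X_def)
  next
    case True
    have "(\<Sum>n=m..k'. \<Sum>r=0..l-m. X m n r * D (k-n) (l-m-r)) = real k * (\<Sum>n=m..k'. \<Sum>r=0..l-m. Y m n r)"
      unfolding sum_distrib_left
    proof (rule sum.cong)
      fix n assume n: "n \<in> {m..k'}"
      have kn: "k - n = Suc (k' - n)" using n k' by auto
      have "(\<Sum>r=0..l-m. X m n r * D (k-n) (l-m-r))
         = (\<Sum>r=0..l-m. (-1)^r * G / (fact m * fact (l-m-r)) * Ecoef n m *
            (real (k-n) * Ccoef r (k-n) - (if r=0 then 0 else Ccoef (r-1) (k-n))) * u^(k-n-1) * L^(l-m-r))"
        unfolding X_def D_def by (rule inner) (use u0 kn in auto)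
      also have "\<dots> = (\<Sum>r=0..l-m. real k * Y m n r)"
      proof (rule sum.cong)
        fix r
        have "real (k-n) * Ccoef r (k-n) - (if r=0 then 0 else Ccoef (r-1) (k-n)) = Ccoef r (k'-n)"
          unfolding kn by (rule Ccoef_rec[symmetric])
        then show "(-1)^r * G / (fact m * fact (l-m-r)) * Ecoef n m *
            (real (k-n) * Ccoef r (k-n) - (if r=0 then 0 else Ccoef (r-1) (k-n))) * u^(k-n-1) * L^(l-m-r)
            = real k * Y m n r"
          unfolding Y_def L_def gam[symmetric] using kn by simp
      qed simp
      finally show "(\<Sum>r=0..l-m. X m n r * D (k-n) (l-m-r)) = (\<Sum>r=0..l-m. real k * Y m n r)" .
    qed simp
    moreover have split: "(\<Sum>n=m..k. F n) = (\<Sum>n=m..k'. F n) + F k" for F :: "nat \<Rightarrow> real"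
      using True k' by (simp add: sum.cl_ivl_Suc)
    ultimately show ?thesis by (simp only: split diff_self_eq_0)
  qed
  have val: "(\<Sum>m=0..l. \<Sum>n=m..k. \<Sum>r=0..l-m. X m n r * D (k-n) (l-m-r))
     = real k * Ktilde l u (k - 1)
            + (\<Sum>m=0..l. \<Sum>r=0..l-m.
                (-1)^r * Gamma (real k + 1) / (fact m * fact (l - m - r))
                * Ecoef k m * Ccoef r 0 * deriv (\<lambda>v. ln v ^ (l - m - r)) u)"
  proof -
    have KY: "Ktilde l u (k-1) = (\<Sum>m=0..l. \<Sum>n=m..k'. \<Sum>r=0..l-m. Y m n r)"
      unfolding Ktilde_def Y_def k' by (simp only: diff_Suc_1)
    have Tm: "(\<Sum>r=0..l-m. X m k r * D 0 (l-m-r)) = (\<Sum>r=0..l-m. (-1)^r * Gamma (real k + 1) / (fact m * fact (l - m - r))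
                * Ecoef k m * Ccoef r 0 * deriv (\<lambda>v. ln v ^ (l - m - r)) u)" for m
      unfolding X_def G_def dl diff_self_eq_0 ..
    show ?thesis by (simp only: perm sum.distrib sum_distrib_left KY Tm)
  qed
  show ?thesis using der unfolding val .
qed

end
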